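(* Let $R$ be an environment with a single door pixel $s$, and let $A=|R|$ be the number of its pixels. Run the Depth-First Leader-Follower (DFLF) strategy defined in the context. The algorithm halts exactly when all pixels of $R$ are occupied by robots, and its makespan is $2A-1$.
   Context: Pixels are the unit squares of the integer grid, identified with their lower-left corners $(i,j)\in\mathbb{Z}^2$. Two pixels are neighbors if they share an edge, so $(i,j)$ has the four neighbors $(i\pm1,j)$ and $(i,j\pm1)$. The environment $R$ is a finite set of pixels that is connected under this neighbor relation. It contains a single distinguished door pixel $s\in R$. Time is discrete, $t=0,1,2,\dots$. At each time, every pixel of $R$ holds at most one robot. $p(r,t)$ denotes the pixel occupied by robot $r$ at time $t$, and $\mathrm{prev}(r,t)=p(r,t-1)$. In one time step a robot either stays where it is or moves to a neighboring pixel of $R$ that is unoccupied. Vacating rule: if a robot occupies pixel $q$ at time $t$ and a different pixel at time $t+1$, then no robot occupies $q$ at time $t+1$; so the earliest a vacated pixel can be re-entered is time $t+2$. At time $0$ exactly one robot is present, on $s$. Door rule: whenever the robot on $s$ leaves, a new robot appears on $s$ as soon as the vacating rule allows. A pixel of $R$ is a frontier pixel at time $t$ if no robot has occupied it at any time $\le t$. The DFLF strategy works as follows. - Each robot is either moving or stopped. A moving robot is either the leader or a follower. - The first robot is the leader. Each newly appearing robot becomes the successor of the robot that most recently left the door, and that robot becomes its predecessor $\mathrm{pred}(r)$. These relations never change. - At each step, the leader behaves as follows. If the leader has a neighboring frontier pixel, it moves to one of them (chosen arbitrarily). Otherwise it becomes stopped permanently and leadership passes to its successor. If the leader has no frontier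 neighbor and is on the door $s$, the algorithm halts. - A follower $r$ moves at time $t$ to the pixel $\mathrm{prev}(\mathrm{pred}(r),t)$ previously occupied by its predecessor. - A stopped robot never moves again. Makespan: the first time $t^*$ at which every pixel of $R$ is occupied. *)

theory Defs
  imports Main
begin

type_synonym pixel = "int \<times> int"

text \<open>Robots are numbered 0,1,2,... in order of appearance on the door, so robot k's
predecessor is robot k-1.  pos k t = Some p means robot k occupies pixel p at time t,
None means robot k has not yet appeared.  ldr t is the index of the current leader at time t.\<close>

definition nbr :: "pixel \<Rightarrow> pixel \<Rightarrow> bool" where
  "nbr p q \<longleftrightarrow> \<bar>fst p - fst q\<bar> + \<bar>snd p - snd q\<bar> = 1"

definition pix_connected :: "pixel set \<Rightarrow> bool" where
  "pix_connected R \<longleftrightarrow>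
     (\<forall>p\<in>R. \<forall>q\<in>R. (\<lambda>a b. a \<in> R \<and> b \<in> R \<and> nbr a b)\<^sup>*\<^sup>* p q)"

definition occ :: "(nat \<Rightarrow> nat \<Rightarrow> pixel option) \<Rightarrow> nat \<Rightarrow> pixel set" where
  "occ pos t = {q. \<exists>k. pos k t = Some q}"

definition frontier :: "pixel set \<Rightarrow> (nat \<Rightarrow> nat \<Rightarrow> pixel option) \<Rightarrow> nat \<Rightarrow> pixel set" where
  "frontier R pos t = {q \<in> R. \<forall>t'\<le>t. q \<notin> occ pos t'}"

definition halted ::
  "pixel set \<Rightarrow> pixel \<Rightarrow> (nat \<Rightarrow> nat \<Rightarrow> pixel option) \<Rightarrow> (nat \<Rightarrow> nat) \<Rightarrow> nat \<Rightarrow> bool" where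
  "halted R s pos ldr t \<longleftrightarrow>
     pos (ldr t) t = Some s \<and> \<not> (\<exists>q\<in>frontier R pos t. nbr s q)"

text \<open>The leader moves to a frontier neighbour if it has one,
otherwise it stops and leadership passes to its successor from time t+1 on (in the current
step the successor still acts as a follower).\<close>

definition dflf_step ::
  "pixel set \<Rightarrow> pixel \<Rightarrow> (nat \<Rightarrow> nat \<Rightarrow> pixel option) \<Rightarrow> (nat \<Rightarrow> nat) \<Rightarrow> nat \<Rightarrow> bool" where
  "dflf_step R s pos ldr t \<longleftrightarrow>
     (case pos (ldr t) t of
        None \<Rightarrow> ldr (t+1) = ldr t
      | Some q \<Rightarrow>
          (if \<exists>q'\<in>frontier R pos t. nbr q q'
           then ldr (t+1) = ldr t \<and>
                (\<exists>q'\<in>frontier R pos t. nbr q q' \<and> pos (ldr t) (t+1) = Some q')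
           else ldr (t+1) = Suc (ldr t) \<and> pos (ldr t) (t+1) = Some q))
   \<and> (\<forall>k. k < ldr t \<longrightarrow> pos k t \<noteq> None \<longrightarrow> pos k (t+1) = pos k t)
   \<and> (\<forall>k. ldr t < k \<longrightarrow> pos k t \<noteq> None \<longrightarrow> pos k (t+1) = pos (k-1) (t-1))
   \<and> (\<forall>k. pos k t = None \<longrightarrow>
          pos k (t+1) = (if s \<notin> occ pos t \<and> (k = 0 \<or> pos (k-1) t \<noteq> None)
                         then Some s else None))"

definition dflf_run ::
  "pixel set \<Rightarrow> pixel \<Rightarrow> (nat \<Rightarrow> nat \<Rightarrow> pixel option) \<Rightarrow> (nat \<Rightarrow> nat) \<Rightarrow> bool" where
  "dflf_run R s pos ldr \<longleftrightarrow>
     pos 0 0 = Some s \<and> (\<forall>k>0. pos k 0 = None) \<and> ldr 0 = 0 \<and>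
     (\<forall>t. (\<forall>t'\<le>t. \<not> halted R s pos ldr t') \<longrightarrow> dflf_step R s pos ldr t)"

definition makespan :: "pixel set \<Rightarrow> (nat \<Rightarrow> nat \<Rightarrow> pixel option) \<Rightarrow> nat" where
  "makespan R pos = (LEAST t. R \<subseteq> occ pos t)"

end

theory Submission imports Defs begin

definition vis :: "(nat \<Rightarrow> nat \<Rightarrow> pixel option) \<Rightarrow> nat \<Rightarrow> pixel set" where
  "vis pos t = {q. \<exists>t'\<le>t. q \<in> occ pos t'}"

lemma vis_Suc: "vis pos (Suc t) = vis pos t \<union> occ pos (Suc t)"
  unfolding vis_def using le_Suc_eq by auto

lemma vis_0: "vis pos 0 = occ pos 0"
  unfolding vis_def by auto

lemma occ_vis: "occ pos t \<subseteq> vis pos t"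
  unfolding vis_def by auto

lemma frontier_vis: "frontier R pos t = {q \<in> R. q \<notin> vis pos t}"
  unfolding frontier_def vis_def by auto

definition dinv where
  "dinv R s pos ldr t c d \<longleftrightarrow>
    c 0 = s \<and> inj_on c {..d} \<and> c ` {..d} \<subseteq> R \<and> (\<forall>i<d. nbr (c i) (c (Suc i))) \<and>
    t = d + 2 * ldr t \<and>
    (\<forall>k<ldr t. \<exists>q. pos k t = Some q \<and> q \<in> R \<and> q \<notin> c ` {..d} \<and>
        (\<forall>q'\<in>R. nbr q q' \<longrightarrow> q' \<in> vis pos t)) \<and>
    (\<forall>k1<ldr t. \<forall>k2<ldr t. pos k1 t = pos k2 t \<longrightarrow> k1 = k2) \<and>
    (\<forall>j. 2*j \<le> d \<longrightarrow> pos (ldr t + j) t = Some (c (d - 2*j))) \<and>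
    (\<forall>k. ldr t + d div 2 < k \<longrightarrow> pos k t = None) \<and>
    (\<forall>j. 2*j+1 \<le> d \<longrightarrow> pos (ldr t + j) (t-1) = Some (c (d - 1 - 2*j))) \<and>
    vis pos t = c ` {..d} \<union> {q. \<exists>k<ldr t. pos k t = Some q}"

lemma occ_char:
  assumes "\<forall>k. L + d div 2 < k \<longrightarrow> pos k t = None"
    and "\<forall>j. 2*j \<le> d \<longrightarrow> pos (L+j) t = Some (c (d-2*j))"
  shows "occ pos t = {q. \<exists>k<L. pos k t = Some q} \<union> {c (d-2*j) | j. 2*j \<le> d}"
proof
  show "occ pos t \<subseteq> {q. \<exists>k<L. pos k t = Some q} \<union> {c (d-2*j) | j. 2*j \<le> d}"
  proof
    fix q assume "q \<in> occ pos t"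
    then obtain k where k: "pos k t = Some q" unfolding occ_def by auto
    show "q \<in> {q. \<exists>k<L. pos k t = Some q} \<union> {c (d-2*j) | j. 2*j \<le> d}"
    proof (cases "k < L")
      case True then show ?thesis using k by auto
    next
      case False
      then have "k \<le> L + d div 2" using assms(1) k by (metis not_le option.distinct(1))
      then have "k = L + (k - L)" using False by simp
      moreover have "2*(k-L) \<le> d" using \<open>k \<le> L + d div 2\<close> by linarith
      ultimately obtain j where j: "k = L + j" "2*j \<le> d" by blast
      then show ?thesis using assms(2) k by auto
    qed
  qed
  show "{q. \<exists>k<L. pos k t = Some q} \<union> {c (d-2*j) | j. 2*j \<le> d} \<subseteq> occ pos t"
    using assms(2) unfolding occ_def by (auto; metis)
qed

lemma s_occ:
  assumes "dinv R s pos ldr t c d"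
  shows "s \<in> occ pos t \<longleftrightarrow> even d"
proof -
  have oc: "occ pos t = {q. \<exists>k<ldr t. pos k t = Some q} \<union> {c (d-2*j) | j. 2*j \<le> d}"
    using assms unfolding dinv_def by (intro occ_char) auto
  show ?thesis
  proof
    assume "s \<in> occ pos t"
    then consider "\<exists>k<ldr t. pos k t = Some s" | j where "2*j \<le> d" "s = c (d - 2*j)"
      using oc by auto
    then show "even d"
    proof cases
      case 1
      then obtain k where "k < ldr t" "pos k t = Some s" by blast
      then have "s \<notin> c ` {..d}" using assms unfolding dinv_def by fastforce
      moreover have "c 0 = s" using assms unfolding dinv_def by simp
      ultimately show ?thesis by auto
    next
      case 2
      then have "c (d - 2*j) = c 0" using assms unfolding dinv_def by auto
      moreover have "inj_on c {..d}" using assms unfolding dinv_def by auto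
      moreover have "d - 2*j \<in> {..d}" "0 \<in> {..d}" by auto
      ultimately have "d - 2*j = 0" by (metis inj_onD)
      then show ?thesis using 2 by presburger
    qed
  next
    assume "even d"
    then have "2 * (d div 2) \<le> d" "d - 2*(d div 2) = 0" by auto
    moreover have "c 0 = s" using assms unfolding dinv_def by simp
    ultimately have "s \<in> {c (d-2*j) | j. 2*j \<le> d}" by (metis (mono_tags, lifting) mem_Collect_eq)
    then show "s \<in> occ pos t" using oc by blast
  qed
qed


lemma dinvE:
  assumes "dinv R s pos ldr t c d"
  obtains "c 0 = s" "inj_on c {..d}" "c ` {..d} \<subseteq> R"
    "\<forall>i<d. nbr (c i) (c (Suc i))" "t = d + 2 * ldr t"
    "\<forall>k<ldr t. \<exists>q. pos k t = Some q \<and> q \<in> R \<and> q \<notin> c ` {..d} \<and>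
        (\<forall>q'\<in>R. nbr q q' \<longrightarrow> q' \<in> vis pos t)"
    "\<forall>k1<ldr t. \<forall>k2<ldr t. pos k1 t = pos k2 t \<longrightarrow> k1 = k2"
    "\<forall>j. 2*j \<le> d \<longrightarrow> pos (ldr t + j) t = Some (c (d - 2*j))"
    "\<forall>k. ldr t + d div 2 < k \<longrightarrow> pos k t = None"
    "\<forall>j. 2*j+1 \<le> d \<longrightarrow> pos (ldr t + j) (t-1) = Some (c (d - 1 - 2*j))"
    "vis pos t = c ` {..d} \<union> {q. \<exists>k<ldr t. pos k t = Some q}"
  using assms unfolding dinv_def by (elim conjE) (rule that)

lemma dinv_step:
  assumes inv: "dinv R s pos ldr t c d" and nh: "\<not> halted R s pos ldr t"
    and st: "dflf_step R s pos ldr t"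
  shows "\<exists>c' d'. dinv R s pos ldr (Suc t) c' d'"
proof -
  define L where "L = ldr t"
  obtain c0: "c 0 = s" and inj: "inj_on c {..d}" and cR: "c ` {..d} \<subseteq> R"
    and cn: "\<forall>i<d. nbr (c i) (c (Suc i))" and tt: "t = d + 2*L"
    and stp: "\<forall>k<L. \<exists>q. pos k t = Some q \<and> q \<in> R \<and> q \<notin> c ` {..d} \<and>
        (\<forall>q'\<in>R. nbr q q' \<longrightarrow> q' \<in> vis pos t)"
    and sinj: "\<forall>k1<L. \<forall>k2<L. pos k1 t = pos k2 t \<longrightarrow> k1 = k2"
    and mv: "\<forall>j. 2*j \<le> d \<longrightarrow> pos (L + j) t = Some (c (d - 2*j))"
    and nn: "\<forall>k. L + d div 2 < k \<longrightarrow> pos k t = None"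
    and pv: "\<forall>j. 2*j+1 \<le> d \<longrightarrow> pos (L + j) (t-1) = Some (c (d - 1 - 2*j))"
    and vs: "vis pos t = c ` {..d} \<union> {q. \<exists>k<L. pos k t = Some q}"
    using inv unfolding L_def by (rule dinvE)
  have lead: "pos L t = Some (c d)" using mv by (metis add_0_right le0 minus_nat.diff_0 mult_0_right)
  have socc: "s \<in> occ pos t \<longleftrightarrow> even d" using s_occ[OF inv] .
  have st0: "(case pos L t of
        None \<Rightarrow> ldr (t+1) = L
      | Some q \<Rightarrow>
          (if \<exists>q'\<in>frontier R pos t. nbr q q'
           then ldr (t+1) = L \<and>
                (\<exists>q'\<in>frontier R pos t. nbr q q' \<and> pos L (t+1) = Some q')
           else ldr (t+1) = Suc L \<and> pos L (t+1) = Some q))"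
    using st unfolding dflf_step_def L_def by (rule conjunct1)
  have stL: "(if \<exists>q'\<in>frontier R pos t. nbr (c d) q'
           then ldr (t+1) = L \<and>
                (\<exists>q'\<in>frontier R pos t. nbr (c d) q' \<and> pos L (t+1) = Some q')
           else ldr (t+1) = Suc L \<and> pos L (t+1) = Some (c d))"
    using st0 by (simp only: lead option.case)
  have stA: "\<forall>k. k < L \<longrightarrow> pos k t \<noteq> None \<longrightarrow> pos k (Suc t) = pos k t"
    and stB: "\<forall>k. L < k \<longrightarrow> pos k t \<noteq> None \<longrightarrow> pos k (Suc t) = pos (k-1) (t-1)"
    and stC: "\<forall>k. pos k t = None \<longrightarrow>
          pos k (Suc t) = (if s \<notin> occ pos t \<and> (k = 0 \<or> pos (k-1) t \<noteq> None)
                         then Some s else None)"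
    using st unfolding dflf_step_def L_def by simp_all
  have stopped_same: "\<forall>k<L. pos k (Suc t) = pos k t" using stA stp by force
  have Fsame: "{q. \<exists>k<L. pos k (Suc t) = Some q} = {q. \<exists>k<L. pos k t = Some q}"
    using stopped_same by auto
  have vmono: "vis pos t \<subseteq> vis pos (Suc t)" using vis_Suc by blast
  show ?thesis
  proof (cases "\<exists>q'\<in>frontier R pos t. nbr (c d) q'")
    case True
    then obtain q' where q'f: "q' \<in> frontier R pos t" and q'n: "nbr (c d) q'"
      and ldr1: "ldr (Suc t) = L" and pq': "pos L (Suc t) = Some q'" using stL by auto
    have q'R: "q' \<in> R" and q'v: "q' \<notin> vis pos t" using q'f frontier_vis by auto
    define c' where "c' = c(Suc d := q')"
    have c'lo: "\<forall>i\<le>d. c' i = c i" unfolding c'_def by auto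
    have q'nc: "q' \<notin> c ` {..d}" using q'v vs by auto
    have img0: "c' ` {..d} = c ` {..d}" using c'lo by auto
    have img: "c' ` {..Suc d} = insert q' (c ` {..d})"
    proof -
      have "c' ` {..Suc d} = insert (c' (Suc d)) (c' ` {..d})" by (simp only: atMost_Suc image_insert)
      then show ?thesis using img0 unfolding c'_def by simp
    qed
    have mv': "\<forall>j. 2*j \<le> Suc d \<longrightarrow> pos (L + j) (Suc t) = Some (c' (Suc d - 2*j))"
    proof (intro allI impI)
      fix j assume j: "2*j \<le> Suc d"
      show "pos (L + j) (Suc t) = Some (c' (Suc d - 2*j))"
      proof (cases "j = 0")
        case True then show ?thesis using pq' c'_def by simp
      next
        case False
        show ?thesis
        proof (cases "2*j \<le> d")
          case True
          have "pos (L+j) t \<noteq> None" using mv True by auto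
          then have "pos (L+j) (Suc t) = pos (L+j-1) (t-1)" using stB False by auto
          also have "L+j-1 = L + (j-1)" using False by simp
          also have "pos (L+(j-1)) (t-1) = Some (c (d - 1 - 2*(j-1)))"
          proof -
            have "2*(j-1)+1 \<le> d" using False True by arith
            then show ?thesis using pv by blast
          qed
          also have "d - 1 - 2*(j-1) = Suc d - 2*j" using False True by arith
          finally show ?thesis using c'lo False by simp
        next
          case False2: False
          then have dj: "Suc d = 2*j" using j by simp
          have "L + d div 2 < L + j" using dj by presburger
          then have none: "pos (L+j) t = None" using nn by auto
          have odd: "s \<notin> occ pos t" using socc dj by presburger
          have "2*(j-1) \<le> d" using dj by simp
          then have "pos (L+(j-1)) t \<noteq> None" using mv by auto
          moreover have "L+j-1 = L+(j-1)" using False by simp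
          ultimately have "pos (L+j) (Suc t) = Some s" using stC none odd by auto
          then show ?thesis using dj c0 c'_def by simp
        qed
      qed
    qed
    have nn': "\<forall>k. L + Suc d div 2 < k \<longrightarrow> pos k (Suc t) = None"
    proof (intro allI impI)
      fix k assume k: "L + Suc d div 2 < k"
      then have "L + d div 2 < k" by presburger
      then have none: "pos k t = None" using nn by auto
      have "\<not> (s \<notin> occ pos t \<and> (k = 0 \<or> pos (k-1) t \<noteq> None))"
      proof
        assume a: "s \<notin> occ pos t \<and> (k = 0 \<or> pos (k-1) t \<noteq> None)"
        then have od: "odd d" using socc by auto
        have "k \<noteq> 0" using k by auto
        then have "pos (k-1) t \<noteq> None" using a by auto
        then have "\<not> (L + d div 2 < k - 1)" using nn by auto
        moreover have "Suc d div 2 = Suc (d div 2)" using od by presburger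
        ultimately show False using k by linarith
      qed
      then show "pos k (Suc t) = None" using stC none by auto
    qed
    have pv': "\<forall>j. 2*j+1 \<le> Suc d \<longrightarrow> pos (L + j) (Suc t - 1) = Some (c' (Suc d - 1 - 2*j))"
      using mv c'lo by auto
    have occ1: "occ pos (Suc t) = {q. \<exists>k<L. pos k (Suc t) = Some q} \<union> {c' (Suc d - 2*j) | j. 2*j \<le> Suc d}"
      using nn' mv' by (rule occ_char[of L "Suc d" pos "Suc t" c'])
    have A: "{c' (Suc d - 2*j) | j. 2*j \<le> Suc d} \<subseteq> c' ` {..Suc d}" by auto
    have B: "q' \<in> occ pos (Suc t)" using pq' unfolding occ_def by auto
    have vs': "vis pos (Suc t) = c' ` {..Suc d} \<union> {q. \<exists>k<L. pos k (Suc t) = Some q}"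
    proof -
      have "vis pos (Suc t) = vis pos t \<union> occ pos (Suc t)" by (rule vis_Suc)
      then show ?thesis using A B occ1 vs Fsame img by auto
    qed
    have stp': "\<forall>k<L. \<exists>q. pos k (Suc t) = Some q \<and> q \<in> R \<and> q \<notin> c' ` {..Suc d} \<and>
        (\<forall>q''\<in>R. nbr q q'' \<longrightarrow> q'' \<in> vis pos (Suc t))"
    proof (intro allI impI)
      fix k assume k: "k < L"
      then obtain q where q: "pos k t = Some q" "q \<in> R" "q \<notin> c ` {..d}"
        "\<forall>q'\<in>R. nbr q q' \<longrightarrow> q' \<in> vis pos t" using stp by blast
      have "q \<in> vis pos t" using vs q k by auto
      then have "q \<noteq> q'" using q'v by auto
      then show "\<exists>q. pos k (Suc t) = Some q \<and> q \<in> R \<and> q \<notin> c' ` {..Suc d} \<and>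
        (\<forall>q''\<in>R. nbr q q'' \<longrightarrow> q'' \<in> vis pos (Suc t))"
        using q img stopped_same k vmono by auto
    qed
    have sinj': "\<forall>k1<L. \<forall>k2<L. pos k1 (Suc t) = pos k2 (Suc t) \<longrightarrow> k1 = k2"
      using sinj stopped_same by auto
    have c'0: "c' 0 = s" using c0 c'_def by simp
    have inj': "inj_on c' {..Suc d}"
    proof -
      have "inj_on c' {..d}" using inj c'lo by (simp add: inj_on_def)
      moreover have "c' (Suc d) \<notin> c' ` {..d}" using q'nc img0 c'_def by simp
      ultimately show ?thesis by (simp add: atMost_Suc)
    qed
    have cR': "c' ` {..Suc d} \<subseteq> R" using img cR q'R by auto
    have cn': "\<forall>i<Suc d. nbr (c' i) (c' (Suc i))"
    proof (intro allI impI)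
      fix i assume "i < Suc d"
      then consider "i < d" | "i = d" by linarith
      then show "nbr (c' i) (c' (Suc i))"
      proof cases
        case 1 then show ?thesis using cn c'lo by simp
      next
        case 2 then show ?thesis using q'n c'lo c'_def by simp
      qed
    qed
    have "dinv R s pos ldr (Suc t) c' (Suc d)"
      unfolding dinv_def ldr1 using c'0 inj' cR' cn' tt stp' sinj' mv' nn' pv' vs' by simp
    then show ?thesis by blast
  next
    case False
    then have ldr1: "ldr (Suc t) = Suc L" and pL: "pos L (Suc t) = Some (c d)" using stL by auto
    have "c d \<noteq> s"
    proof
      assume "c d = s"
      then have "halted R s pos ldr t" unfolding halted_def L_def[symmetric] using lead False by simp
      then show False using nh by simp
    qed
    then have "d \<noteq> 0" using c0 by (metis gr0I)
    then obtain e where de: "d = Suc e" by (cases d) auto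
    have clos: "\<forall>q''\<in>R. nbr (c d) q'' \<longrightarrow> q'' \<in> vis pos t" using False frontier_vis by auto
    have mv': "\<forall>j. 2*j \<le> e \<longrightarrow> pos (Suc L + j) (Suc t) = Some (c (e - 2*j))"
    proof (intro allI impI)
      fix j assume j: "2*j \<le> e"
      show "pos (Suc L + j) (Suc t) = Some (c (e - 2*j))"
      proof (cases "2*Suc j \<le> d")
        case True
        have "pos (L + Suc j) t = Some (c (d - 2 * Suc j))" using mv True by blast
        then have "pos (L + Suc j) t \<noteq> None" by simp
        then have "pos (Suc L + j) (Suc t) = pos (L + j) (t-1)" using stB by auto
        also have "\<dots> = Some (c (d - 1 - 2*j))" using pv True by auto
        finally show ?thesis using de by simp
      next
        case False2: False
        then have dj: "d = 2*j+1" using j de by simp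
        have "L + d div 2 < Suc L + j" using dj by presburger
        then have none: "pos (Suc L + j) t = None" using nn by auto
        have odd: "s \<notin> occ pos t" using socc dj by presburger
        have "pos (L + j) t \<noteq> None" using mv dj by auto
        then have "pos (Suc L + j) (Suc t) = Some s" using stC none odd by auto
        then show ?thesis using dj de c0 by simp
      qed
    qed
    have nn': "\<forall>k. Suc L + e div 2 < k \<longrightarrow> pos k (Suc t) = None"
    proof (intro allI impI)
      fix k assume k: "Suc L + e div 2 < k"
      then have "L + d div 2 < k" using de by presburger
      then have none: "pos k t = None" using nn by auto
      have "\<not> (s \<notin> occ pos t \<and> (k = 0 \<or> pos (k-1) t \<noteq> None))"
      proof
        assume a: "s \<notin> occ pos t \<and> (k = 0 \<or> pos (k-1) t \<noteq> None)"
        then have od: "odd d" using socc by auto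
        have "k \<noteq> 0" using k by auto
        then have "pos (k-1) t \<noteq> None" using a by auto
        then have "\<not> (L + d div 2 < k - 1)" using nn by auto
        moreover have "d div 2 = e div 2" using od de by presburger
        ultimately show False using k by linarith
      qed
      then show "pos k (Suc t) = None" using stC none by auto
    qed
    have pv': "\<forall>j. 2*j+1 \<le> e \<longrightarrow> pos (Suc L + j) (Suc t - 1) = Some (c (e - 1 - 2*j))"
    proof (intro allI impI)
      fix j assume "2*j+1 \<le> e"
      then have "2 * Suc j \<le> d" using de by simp
      then have "pos (L + Suc j) t = Some (c (d - 2 * Suc j))" using mv by blast
      then show "pos (Suc L + j) (Suc t - 1) = Some (c (e - 1 - 2*j))" using de by simp
    qed
    have F': "{q. \<exists>k<Suc L. pos k (Suc t) = Some q} = insert (c d) {q. \<exists>k<L. pos k t = Some q}"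
      using stopped_same pL by (auto simp: less_Suc_eq)
    have occ1: "occ pos (Suc t) = {q. \<exists>k<Suc L. pos k (Suc t) = Some q} \<union> {c (e - 2*j) | j. 2*j \<le> e}"
      using nn' mv' by (rule occ_char[of "Suc L" e pos "Suc t" c])
    have A: "{c (e - 2*j) | j. 2*j \<le> e} \<subseteq> c ` {..e}" by auto
    have imgd: "c ` {..d} = insert (c d) (c ` {..e})" using de by (simp add: atMost_Suc)
    have vs': "vis pos (Suc t) = c ` {..e} \<union> {q. \<exists>k<Suc L. pos k (Suc t) = Some q}"
    proof -
      have "vis pos (Suc t) = vis pos t \<union> occ pos (Suc t)" by (rule vis_Suc)
      then show ?thesis using A occ1 vs F' imgd by auto
    qed
    have cdn: "c d \<notin> c ` {..e}"
    proof
      assume "c d \<in> c ` {..e}"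
      then obtain i where "i \<le> e" "c d = c i" by auto
      moreover have "d \<in> {..d}" "i \<in> {..d}" using \<open>i \<le> e\<close> de by auto
      ultimately have "d = i" using inj by (metis inj_onD)
      then show False using \<open>i \<le> e\<close> de by simp
    qed
    have stp': "\<forall>k<Suc L. \<exists>q. pos k (Suc t) = Some q \<and> q \<in> R \<and> q \<notin> c ` {..e} \<and>
        (\<forall>q''\<in>R. nbr q q'' \<longrightarrow> q'' \<in> vis pos (Suc t))"
    proof (intro allI impI)
      fix k assume k: "k < Suc L"
      show "\<exists>q. pos k (Suc t) = Some q \<and> q \<in> R \<and> q \<notin> c ` {..e} \<and>
        (\<forall>q''\<in>R. nbr q q'' \<longrightarrow> q'' \<in> vis pos (Suc t))"
      proof (cases "k < L")
        case True
        then obtain q where q: "pos k t = Some q" "q \<in> R" "q \<notin> c ` {..d}"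
          "\<forall>q'\<in>R. nbr q q' \<longrightarrow> q' \<in> vis pos t" using stp by blast
        then show ?thesis using imgd stopped_same True vmono by auto
      next
        case False
        then have "k = L" using k by simp
        moreover have "c d \<in> R" using cR by auto
        ultimately show ?thesis using pL cdn clos vmono by auto
      qed
    qed
    have sinj': "\<forall>k1<Suc L. \<forall>k2<Suc L. pos k1 (Suc t) = pos k2 (Suc t) \<longrightarrow> k1 = k2"
    proof (intro allI impI)
      fix k1 k2 assume k: "k1 < Suc L" "k2 < Suc L" and eq: "pos k1 (Suc t) = pos k2 (Suc t)"
      have ne: "pos k (Suc t) \<noteq> Some (c d)" if "k < L" for k
        using stp stopped_same that by fastforce
      show "k1 = k2"
      proof (cases "k1 < L")
        case True
        show ?thesis
        proof (cases "k2 < L")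
          case True
          then show ?thesis using \<open>k1 < L\<close> sinj stopped_same eq by auto
        next
          case False
          then have "k2 = L" using k by simp
          then show ?thesis using ne[OF \<open>k1 < L\<close>] eq pL by simp
        qed
      next
        case False
        then have k1L: "k1 = L" using k by simp
        show ?thesis
        proof (cases "k2 < L")
          case True
          then show ?thesis using ne[OF True] eq pL k1L by simp
        next
          case False
          then show ?thesis using k k1L by simp
        qed
      qed
    qed
    have inj': "inj_on c {..e}" using inj de by (auto intro: inj_on_subset)
    have cR': "c ` {..e} \<subseteq> R" using cR de by auto
    have cn': "\<forall>i<e. nbr (c i) (c (Suc i))" using cn de by auto
    have tt': "Suc t = e + 2 * Suc L" using tt de by simp
    have "dinv R s pos ldr (Suc t) c e"
      unfolding dinv_def ldr1 using c0 inj' cR' cn' tt' stp' sinj' mv' nn' pv' vs' by simp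
    then show ?thesis by blast
  qed
qed


lemma dinv_0:
  assumes "s \<in> R" and run: "dflf_run R s pos ldr"
  shows "dinv R s pos ldr 0 (\<lambda>_. s) 0"
proof -
  have p0: "pos 0 0 = Some s" and pk: "\<forall>k>0. pos k 0 = None" and l0: "ldr 0 = 0"
    using run unfolding dflf_run_def by auto
  have occ0: "occ pos 0 = {s}"
  proof
    show "occ pos 0 \<subseteq> {s}" unfolding occ_def using p0 pk by (auto, metis gr0I option.distinct(1) option.inject)
    show "{s} \<subseteq> occ pos 0" unfolding occ_def using p0 by auto
  qed
  show ?thesis unfolding dinv_def l0 vis_0 occ0 using p0 pk \<open>s \<in> R\<close> by auto
qed

lemma dinv_reach:
  assumes "s \<in> R" and run: "dflf_run R s pos ldr"
  shows "(\<forall>t'<t. \<not> halted R s pos ldr t') \<Longrightarrow> \<exists>c d. dinv R s pos ldr t c d"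
proof (induction t)
  case 0
  then show ?case using dinv_0[OF assms] by blast
next
  case (Suc t)
  then obtain c d where inv: "dinv R s pos ldr t c d" by auto
  have nh: "\<not> halted R s pos ldr t" using Suc.prems by auto
  have "\<forall>t'\<le>t. \<not> halted R s pos ldr t'" using Suc.prems by auto
  then have "dflf_step R s pos ldr t" using run unfolding dflf_run_def by blast
  then show ?case using dinv_step[OF inv nh] by blast
qed

lemma dinv_card:
  assumes inv: "dinv R s pos ldr t c d" and fin: "finite R"
  shows "card (vis pos t) = Suc d + ldr t" "vis pos t \<subseteq> R"
proof -
  obtain inj: "inj_on c {..d}" and cR: "c ` {..d} \<subseteq> R"
    and stp: "\<forall>k<ldr t. \<exists>q. pos k t = Some q \<and> q \<in> R \<and> q \<notin> c ` {..d} \<and>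
        (\<forall>q'\<in>R. nbr q q' \<longrightarrow> q' \<in> vis pos t)"
    and sinj: "\<forall>k1<ldr t. \<forall>k2<ldr t. pos k1 t = pos k2 t \<longrightarrow> k1 = k2"
    and vs: "vis pos t = c ` {..d} \<union> {q. \<exists>k<ldr t. pos k t = Some q}"
    using inv by (rule dinvE)
  define f where "f k = the (pos k t)" for k
  have Feq: "{q. \<exists>k<ldr t. pos k t = Some q} = f ` {..<ldr t}"
  proof
    show "{q. \<exists>k<ldr t. pos k t = Some q} \<subseteq> f ` {..<ldr t}" unfolding f_def by force
    show "f ` {..<ldr t} \<subseteq> {q. \<exists>k<ldr t. pos k t = Some q}"
      unfolding f_def using stp by fastforce
  qed
  have finj: "inj_on f {..<ldr t}"
  proof (rule inj_onI)
    fix k1 k2 assume k: "k1 \<in> {..<ldr t}" "k2 \<in> {..<ldr t}" and e: "f k1 = f k2"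
    obtain q1 where "pos k1 t = Some q1" using stp k by blast
    moreover obtain q2 where "pos k2 t = Some q2" using stp k by blast
    ultimately have "pos k1 t = pos k2 t" using e unfolding f_def by simp
    then show "k1 = k2" using sinj k by auto
  qed
  have FR: "f ` {..<ldr t} \<subseteq> R" unfolding f_def using stp by fastforce
  have disj: "c ` {..d} \<inter> f ` {..<ldr t} = {}" unfolding f_def using stp by fastforce
  have "card (c ` {..d} \<union> f ` {..<ldr t}) = card (c ` {..d}) + card (f ` {..<ldr t})"
    using disj by (intro card_Un_disjoint) auto
  also have "\<dots> = Suc d + ldr t" using card_image[OF inj] card_image[OF finj] by simp
  finally show "card (vis pos t) = Suc d + ldr t" using vs Feq by simp
  show "vis pos t \<subseteq> R" using vs Feq FR cR by auto
qed


theorem mainTheorem3: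
  fixes R :: "pixel set" and s :: pixel
    and pos :: "nat \<Rightarrow> nat \<Rightarrow> pixel option" and ldr :: "nat \<Rightarrow> nat"
  assumes "finite R" and "s \<in> R" and "pix_connected R"
    and "dflf_run R s pos ldr"
  shows "\<exists>H. halted R s pos ldr H \<and> (\<forall>t<H. \<not> halted R s pos ldr t)
            \<and> R \<subseteq> occ pos H \<and> (\<forall>t<H. \<not> R \<subseteq> occ pos t)
            \<and> makespan R pos + 1 = 2 * card R - 1"
proof -
  note reach = dinv_reach[OF assms(2) assms(4)]
  have ex: "\<exists>H. halted R s pos ldr H"
  proof (rule ccontr)
    assume no: "\<not> (\<exists>H. halted R s pos ldr H)"
    define T where "T = Suc (2 * card R)"
    obtain c d where inv: "dinv R s pos ldr T c d" using reach no by blast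
    have "card (vis pos T) = Suc d + ldr T" "vis pos T \<subseteq> R"
      using dinv_card[OF inv assms(1)] by auto
    then have "Suc d + ldr T \<le> card R" using card_mono[OF assms(1)] by metis
    moreover have "T = d + 2 * ldr T" using inv by (rule dinvE)
    ultimately show False unfolding T_def by linarith
  qed
  define H where "H = (LEAST t. halted R s pos ldr t)"
  have hH: "halted R s pos ldr H" unfolding H_def using ex by (rule LeastI_ex)
  have nb: "\<forall>t<H. \<not> halted R s pos ldr t" unfolding H_def using not_less_Least by blast
  have notfull: "\<not> R \<subseteq> occ pos t" if "t < H" for t
  proof -
    have "\<forall>t'<t. \<not> halted R s pos ldr t'" using nb that by auto
    then obtain c d where inv: "dinv R s pos ldr t c d" using reach by blast
    obtain c0: "c 0 = s" and inj: "inj_on c {..d}" and cR: "c ` {..d} \<subseteq> R"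
      and stp: "\<forall>k<ldr t. \<exists>q. pos k t = Some q \<and> q \<in> R \<and> q \<notin> c ` {..d} \<and>
        (\<forall>q'\<in>R. nbr q q' \<longrightarrow> q' \<in> vis pos t)"
      and mv: "\<forall>j. 2*j \<le> d \<longrightarrow> pos (ldr t + j) t = Some (c (d - 2*j))"
      and nn: "\<forall>k. ldr t + d div 2 < k \<longrightarrow> pos k t = None"
      using inv by (rule dinvE)
    have oc: "occ pos t = {q. \<exists>k<ldr t. pos k t = Some q} \<union> {c (d-2*j) | j. 2*j \<le> d}"
      using nn mv by (rule occ_char)
    show ?thesis
    proof (cases "d = 0")
      case True
      have "pos (ldr t) t = Some s" using mv True c0 by (metis add_0_right le0 minus_nat.diff_0 mult_0_right)
      then have "\<exists>q\<in>frontier R pos t. nbr s q" using nb that unfolding halted_def by blast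
      then obtain q where "q \<in> R" "q \<notin> vis pos t" unfolding frontier_vis by auto
      then show ?thesis using occ_vis by blast
    next
      case False
      have inR: "c (d-1) \<in> R" using cR by auto
      have "c (d-1) \<notin> occ pos t"
      proof
        assume "c (d-1) \<in> occ pos t"
        then consider "\<exists>k<ldr t. pos k t = Some (c (d-1))" | j where "2*j \<le> d" "c (d-1) = c (d-2*j)"
          using oc by auto
        then show False
        proof cases
          case 1 then show False using stp by fastforce
        next
          case 2
          moreover have "d-1 \<in> {..d}" "d-2*j \<in> {..d}" by auto
          ultimately have "d - 1 = d - 2*j" using inj by (metis inj_onD)
          then show False using False 2 by arith
        qed
      qed
      then show ?thesis using inR by blast
    qed
  qed
  obtain c d where inv: "dinv R s pos ldr H c d" using reach nb by blast
  obtain c0: "c 0 = s" and inj: "inj_on c {..d}"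
    and stp: "\<forall>k<ldr H. \<exists>q. pos k H = Some q \<and> q \<in> R \<and> q \<notin> c ` {..d} \<and>
        (\<forall>q'\<in>R. nbr q q' \<longrightarrow> q' \<in> vis pos H)"
    and tt: "H = d + 2 * ldr H"
    and mv: "\<forall>j. 2*j \<le> d \<longrightarrow> pos (ldr H + j) H = Some (c (d - 2*j))"
    and nn: "\<forall>k. ldr H + d div 2 < k \<longrightarrow> pos k H = None"
    and vs: "vis pos H = c ` {..d} \<union> {q. \<exists>k<ldr H. pos k H = Some q}"
    using inv by (rule dinvE)
  have "pos (ldr H) H = Some (c d)" using mv by (metis add_0_right le0 minus_nat.diff_0 mult_0_right)
  moreover have "pos (ldr H) H = Some s" and nf: "\<not> (\<exists>q\<in>frontier R pos H. nbr s q)"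
    using hH unfolding halted_def by auto
  ultimately have "c d = c 0" using c0 by simp
  moreover have "d \<in> {..d}" "0 \<in> {..d}" by auto
  ultimately have d0: "d = 0" using inj by (metis inj_onD)
  have vsH: "vis pos H = insert s {q. \<exists>k<ldr H. pos k H = Some q}" using vs d0 c0 by simp
  have occH: "occ pos H = insert s {q. \<exists>k<ldr H. pos k H = Some q}"
  proof -
    have "occ pos H = {q. \<exists>k<ldr H. pos k H = Some q} \<union> {c (d-2*j) | j. 2*j \<le> d}"
      using nn mv by (rule occ_char)
    moreover have "{c (d-2*j) | j. 2*j \<le> d} = {s}" using d0 c0 by auto
    ultimately show ?thesis by auto
  qed
  have closed: "\<forall>p\<in>vis pos H. \<forall>q\<in>R. nbr p q \<longrightarrow> q \<in> vis pos H"
  proof (intro ballI impI)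
    fix p q assume p: "p \<in> vis pos H" and q: "q \<in> R" and n: "nbr p q"
    show "q \<in> vis pos H"
    proof (cases "p = s")
      case True
      have "\<forall>x\<in>R. nbr s x \<longrightarrow> x \<in> vis pos H" using nf unfolding frontier_vis by blast
      then show ?thesis using True q n by blast
    next
      case False
      then obtain k where "k < ldr H" "pos k H = Some p" using p vsH by auto
      then show ?thesis using stp q n by fastforce
    qed
  qed
  have Rsub: "R \<subseteq> vis pos H"
  proof
    fix q assume q: "q \<in> R"
    have rel: "(\<lambda>a b. a \<in> R \<and> b \<in> R \<and> nbr a b)\<^sup>*\<^sup>* s q"
      using assms(3) assms(2) q unfolding pix_connected_def by blast
    have "s \<in> vis pos H" using vsH by simp
    from rel this show "q \<in> vis pos H"
    proof (induction rule: rtranclp_induct)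
      case base then show ?case by simp
    next
      case (step y z)
      then show ?case using closed by blast
    qed
  qed
  have RH: "R \<subseteq> occ pos H" using Rsub vsH occH by simp
  have ms: "makespan R pos = H"
    unfolding makespan_def
  proof (rule Least_equality)
    show "R \<subseteq> occ pos H" by (rule RH)
    fix y assume "R \<subseteq> occ pos y"
    then show "H \<le> y" using notfull by (meson not_le)
  qed
  have "card (vis pos H) = Suc d + ldr H" "vis pos H \<subseteq> R"
    using dinv_card[OF inv assms(1)] by auto
  then have "card R = Suc (ldr H)" using Rsub d0 by auto
  then have "makespan R pos + 1 = 2 * card R - 1" using ms tt d0 by simp
  then show ?thesis using hH nb RH notfull by blast
qed

end
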